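(* (i) Let $v_2^\star$ denote the Switcher's optimal value function (for fixed Exploiter policy $\pi^{\mathrm{exploit}}$) and $\mathcal M$ the intervention operator associated with the optimal exploration policy. Then the optimal Switcher's intervention times are given recursively by $$\tau_k=\inf\{t>\tau_{k-1}: (\mathcal M v_2^\star)(s_t)=v_2^\star(s_t)\}.$$ (ii) For $l>0$, denote by $\mu_l(\mathfrak g)$ the number of switch activations performed by the Switcher under its (optimal) switching policy $\mathfrak g$ when $\max_{(s,a)\in\mathcal S\times\mathcal A}L(s,a)=l$. Then $\lim_{l\to0}\mu_l(\mathfrak g)=0$.
   Context: Setting (a two-agent game). $\mathcal S$ is a countable state space, $\mathcal A$ a finite action set, $\mathcal A^{\mathrm{exploit}},\mathcal A^{\mathrm{xplr}}\subseteq\mathcal A$; $P(s'\mid a,s)$ is a transition kernel; $L:\mathcal S\times\mathcal A\to[0,\infty)$ is a bounded uncertainty measure; $\gamma\in(0,1)$; $\beta>0$ is an intervention cost. The Exploiter has a Markov policy $\pi^{\mathrm{exploit}}$; the Switcher has an exploration policy $\pi^{\mathrm{xplr}}$ and a switching rule $\mathfrak g:\mathcal S\to\{0,1\}$. At time $t$, if $\mathfrak g(s_t)=1$ (an intervention), the action $a_t\sim\pi^{\mathrm{xplr}}(\cdot\mid s_t)$ is applied and the Switcher receives $-L(s_t,a_t)-\beta$; otherwise $a_t\sim\pi^{\mathrm{exploit}}(\cdot\mid s_t)$ is applied and the Switcher receives $-L(s_t,a_t)$; then $s_{t+1}\sim P(\cdot\mid a_t,s_t)$. The Switcher's value is $v_2(s)=\mathbb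 E[\sum_{t\ge0}\gamma^t r_t\mid s_0=s]$ with $r_t$ its reward at time $t$; the optimal value $v_2^\star$ is the supremum over $(\pi^{\mathrm{xplr}},\mathfrak g)$. Intervention times: $\tau_0=0$ and $\tau_k=\inf\{t>\tau_{k-1}:\mathfrak g(s_t)=1\}$. Intervention operator: for $v:\mathcal S\to\mathbb R$, $(\mathcal M v)(s)=\sum_{a}\pi^{\mathrm{xplr}}(a\mid s)\big[-L(s,a)-\beta+\gamma\sum_{s'}P(s'\mid a,s)v(s')\big]$. Standing assumption: every switching policy performs only finitely many interventions. *)

theory Defs
  imports "HOL-Probability.Probability"
begin

(* P a s         -- the distribution P(. | a, s) of the next state.
   pie s         -- Exploiter's Markov policy pi^exploit(. | s).
   pix s         -- Switcher's exploration policy pi^xplr(. | s).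
   g s           -- switching rule (True = 1 = intervention). *)

definition act :: "('s \<Rightarrow> 'a pmf) \<Rightarrow> ('s \<Rightarrow> 'a pmf) \<Rightarrow> ('s \<Rightarrow> bool) \<Rightarrow> 's \<Rightarrow> 'a pmf" where
  "act pie pix g s = (if g s then pix s else pie s)"

primrec traj :: "('a \<Rightarrow> 's \<Rightarrow> 's pmf) \<Rightarrow> ('s \<Rightarrow> 'a pmf) \<Rightarrow> ('s \<Rightarrow> 'a pmf) \<Rightarrow> ('s \<Rightarrow> bool)
    \<Rightarrow> nat \<Rightarrow> 's \<Rightarrow> ('s \<times> 'a) list pmf" where
  "traj P pie pix g 0 s = return_pmf []"
| "traj P pie pix g (Suc n) s =
     bind_pmf (act pie pix g s) (\<lambda>a.
     bind_pmf (P a s) (\<lambda>s'.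
     bind_pmf (traj P pie pix g n s') (\<lambda>xs. return_pmf ((s, a) # xs))))"

definition sw_reward :: "('s \<Rightarrow> 'a \<Rightarrow> real) \<Rightarrow> real \<Rightarrow> ('s \<Rightarrow> bool) \<Rightarrow> 's \<times> 'a \<Rightarrow> real" where
  "sw_reward L bet g x = - L (fst x) (snd x) - (if g (fst x) then bet else 0)"

definition disc_return :: "('s \<Rightarrow> 'a \<Rightarrow> real) \<Rightarrow> real \<Rightarrow> real \<Rightarrow> ('s \<Rightarrow> bool) \<Rightarrow> ('s \<times> 'a) list \<Rightarrow> real" where
  "disc_return L bet gam g xs = (\<Sum>t<length xs. gam ^ t * sw_reward L bet g (xs ! t))"

definition sw_value :: "('a \<Rightarrow> 's \<Rightarrow> 's pmf) \<Rightarrow> ('s \<Rightarrow> 'a pmf) \<Rightarrow> ('s \<Rightarrow> 'a \<Rightarrow> real) \<Rightarrow> real \<Rightarrow> real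
    \<Rightarrow> ('s \<Rightarrow> 'a pmf) \<Rightarrow> ('s \<Rightarrow> bool) \<Rightarrow> 's \<Rightarrow> real" where
  "sw_value P pie L bet gam pix g s =
     lim (\<lambda>n. measure_pmf.expectation (traj P pie pix g n s) (disc_return L bet gam g))"

definition adm_xplr :: "'a set \<Rightarrow> ('s \<Rightarrow> 'a pmf) \<Rightarrow> bool" where
  "adm_xplr Ax pix \<longleftrightarrow> (\<forall>s. set_pmf (pix s) \<subseteq> Ax)"

definition v_opt :: "('a \<Rightarrow> 's \<Rightarrow> 's pmf) \<Rightarrow> ('s \<Rightarrow> 'a pmf) \<Rightarrow> 'a set \<Rightarrow> ('s \<Rightarrow> 'a \<Rightarrow> real)
    \<Rightarrow> real \<Rightarrow> real \<Rightarrow> 's \<Rightarrow> real" where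
  "v_opt P pie Ax L bet gam s =
     (SUP pg \<in> {pg. adm_xplr Ax (fst pg)}. sw_value P pie L bet gam (fst pg) (snd pg) s)"

definition optimal_pair :: "('a \<Rightarrow> 's \<Rightarrow> 's pmf) \<Rightarrow> ('s \<Rightarrow> 'a pmf) \<Rightarrow> 'a set \<Rightarrow> ('s \<Rightarrow> 'a \<Rightarrow> real)
    \<Rightarrow> real \<Rightarrow> real \<Rightarrow> ('s \<Rightarrow> 'a pmf) \<Rightarrow> ('s \<Rightarrow> bool) \<Rightarrow> bool" where
  "optimal_pair P pie Ax L bet gam pix g \<longleftrightarrow>
     adm_xplr Ax pix \<and> (\<forall>s. sw_value P pie L bet gam pix g s = v_opt P pie Ax L bet gam s)"

definition Mop :: "('a::finite \<Rightarrow> 's \<Rightarrow> 's pmf) \<Rightarrow> ('s \<Rightarrow> 'a \<Rightarrow> real) \<Rightarrow> real \<Rightarrow> real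
    \<Rightarrow> ('s \<Rightarrow> 'a pmf) \<Rightarrow> ('s \<Rightarrow> real) \<Rightarrow> 's \<Rightarrow> real" where
  "Mop P L bet gam pix v s =
     (\<Sum>a\<in>UNIV. pmf (pix s) a * (- L s a - bet + gam * measure_pmf.expectation (P a s) v))"

definition n_interv :: "('a \<Rightarrow> 's \<Rightarrow> 's pmf) \<Rightarrow> ('s \<Rightarrow> 'a pmf) \<Rightarrow> ('s \<Rightarrow> 'a pmf) \<Rightarrow> ('s \<Rightarrow> bool)
    \<Rightarrow> 's \<Rightarrow> ennreal" where
  "n_interv P pie pix g s =
     (SUP n. \<integral>\<^sup>+ xs. of_nat (length (filter (\<lambda>x. g (fst x)) xs)) \<partial>measure_pmf (traj P pie pix g n s))"

end

theory Submission
  imports Defs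
begin

definition bfun :: "('s \<Rightarrow> real) \<Rightarrow> bool" where
  "bfun f \<longleftrightarrow> (\<exists>C. \<forall>s. \<bar>f s\<bar> \<le> C)"

lemma bfunI: "(\<And>s. \<bar>f s\<bar> \<le> C) \<Longrightarrow> bfun f"
  unfolding bfun_def by blast

lemma bfunE:
  assumes "bfun f"
  obtains C where "0 \<le> C" "\<And>s. \<bar>f s\<bar> \<le> C"
  using assms unfolding bfun_def by (metis abs_ge_zero order_trans)

lemma pmf_integrable_bdd:
  fixes f :: "'b \<Rightarrow> real"
  assumes "\<And>x. \<bar>f x\<bar> \<le> B"
  shows "integrable (measure_pmf M) f"
  by (rule measure_pmf.integrable_const_bound[where B=B]) (auto simp: assms)

lemma bfun_integrable: "bfun f \<Longrightarrow> integrable (measure_pmf M) f"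
  by (erule bfunE) (rule pmf_integrable_bdd)

lemma expectation_bind_bdd:
  fixes f :: "'b \<Rightarrow> real"
  assumes "\<And>x. \<bar>f x\<bar> \<le> B"
  shows "measure_pmf.expectation (bind_pmf M N) f = measure_pmf.expectation M (\<lambda>x. measure_pmf.expectation (N x) f)"
  unfolding measure_pmf_bind
  by (rule integral_bind[where K="count_space UNIV" and B=B and B'=1])
     (auto simp: assms measure_pmf.finite_measure measure_pmf_in_subprob_algebra)

lemma exp_mono:
  fixes f h :: "'b \<Rightarrow> real"
  assumes "\<And>x. \<bar>f x\<bar> \<le> Ca" "\<And>x. \<bar>h x\<bar> \<le> Cb" "\<And>x. f x \<le> h x"
  shows "measure_pmf.expectation p f \<le> measure_pmf.expectation p h"
  by (rule integral_mono[OF pmf_integrable_bdd[OF assms(1)] pmf_integrable_bdd[OF assms(2)] assms(3)])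

lemma exp_const: "measure_pmf.expectation p (\<lambda>x. c) = (c::real)"
  by simp

lemma exp_bound:
  fixes f :: "'b \<Rightarrow> real"
  assumes "\<And>x. \<bar>f x\<bar> \<le> C"
  shows "\<bar>measure_pmf.expectation p f\<bar> \<le> C"
proof -
  have "measure_pmf.expectation p f \<le> measure_pmf.expectation p (\<lambda>x. C)"
    using assms by (intro exp_mono[where Ca=C and Cb="\<bar>C\<bar>"]) (auto simp: abs_le_iff)
  moreover have b: "\<And>x. - C \<le> f x" by (metis abs_le_D2 assms minus_le_iff)
  moreover have "measure_pmf.expectation p (\<lambda>x. -C) \<le> measure_pmf.expectation p f"
    using assms b by (intro exp_mono[where Cb=C and Ca="\<bar>C\<bar>"]) (auto simp: abs_le_iff)
  ultimately show ?thesis by (simp add: abs_le_iff)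
qed

lemma sum_pmf_UNIV: "(\<Sum>a\<in>(UNIV::'a::finite set). pmf p a) = 1"
  by (rule sum_pmf_eq_1) auto

lemma sum_pmf_mono:
  fixes X Y :: "'a::finite \<Rightarrow> real"
  shows "(\<And>a. X a \<le> Y a) \<Longrightarrow> (\<Sum>a\<in>UNIV. pmf p a * X a) \<le> (\<Sum>a\<in>UNIV. pmf p a * Y a)"
  by (intro sum_mono mult_left_mono) auto

lemma sum_pmf_const: "(\<Sum>a\<in>(UNIV::'a::finite set). pmf p a * c) = (c::real)"
  by (simp add: sum_distrib_right[symmetric] sum_pmf_UNIV)

lemma sum_pmf_return: "(\<Sum>a\<in>(UNIV::'a::finite set). pmf (return_pmf b) a * X a) = (X b::real)"
  by (simp add: pmf_return indicator_def)

lemma pow_le0: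
  fixes q a D :: real
  assumes "0 \<le> q" "q < 1" "\<And>n. a \<le> q ^ n * D"
  shows "a \<le> 0"
proof -
  have "(\<lambda>n. q ^ n * D) \<longlonglongrightarrow> 0"
    using assms by (intro tendsto_mult_left_zero LIMSEQ_power_zero) auto
  then show ?thesis using assms(3) by (intro LIMSEQ_le_const[where X="\<lambda>n. q^n*D"]) auto
qed

locale contr_op =
  fixes F :: "('s \<Rightarrow> real) \<Rightarrow> 's \<Rightarrow> real" and q :: real
  assumes q0: "0 \<le> q" and q1: "q < 1"
    and pres: "bfun f \<Longrightarrow> bfun (F f)"
    and contr: "bfun f \<Longrightarrow> bfun h \<Longrightarrow> 0 \<le> c \<Longrightarrow> (\<And>s. f s - h s \<le> c) \<Longrightarrow> F f s - F h s \<le> q * c"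
begin

lemma contr_abs:
  assumes "bfun f" "bfun h" "0 \<le> c" "\<And>s. \<bar>f s - h s\<bar> \<le> c"
  shows "\<bar>F f s - F h s\<bar> \<le> q * c"
proof -
  have a: "f s - h s \<le> c" "h s - f s \<le> c" for s using assms(4)[of s] by (auto simp: abs_le_iff)
  have "F f s - F h s \<le> q * c" using assms a by (intro contr) auto
  moreover have "F h s - F f s \<le> q * c" using assms a by (intro contr) auto
  ultimately show ?thesis by (auto simp: abs_le_iff)
qed

lemma ub:
  assumes "bfun V" "bfun w" "F w = w" "\<And>s. V s \<le> F V s"
  shows "V s \<le> w s"
proof -
  obtain C1 where C1: "0 \<le> C1" "\<And>s. \<bar>V s\<bar> \<le> C1" using bfunE[OF assms(1)] by blast
  obtain C2 where C2: "0 \<le> C2" "\<And>s. \<bar>w s\<bar> \<le> C2" using bfunE[OF assms(2)] by blast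
  have "\<forall>s. V s - w s \<le> q ^ n * (C1 + C2)" for n
  proof (induction n)
    case 0
    show ?case
    proof
      fix s show "V s - w s \<le> q ^ 0 * (C1 + C2)" using C1(2)[of s] C2(2)[of s] by (simp add: abs_le_iff)
    qed
  next
    case (Suc n)
    show ?case
    proof
      fix s
      have "V s - w s \<le> F V s - F w s" using assms(3) assms(4)[of s] by simp
      also have "\<dots> \<le> q * (q ^ n * (C1 + C2))"
        using Suc.IH assms C1 C2 q0 by (intro contr) auto
      finally show "V s - w s \<le> q ^ Suc n * (C1 + C2)" by (simp add: mult.assoc)
    qed
  qed
  then have "V s - w s \<le> 0" using q0 q1 by (intro pow_le0[where q=q and D="C1+C2"]) auto
  then show ?thesis by simp
qed

lemma lb:
  assumes "bfun V" "bfun w" "F w = w" "\<And>s. F V s \<le> V s"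
  shows "w s \<le> V s"
proof -
  obtain C1 where C1: "0 \<le> C1" "\<And>s. \<bar>V s\<bar> \<le> C1" using bfunE[OF assms(1)] by blast
  obtain C2 where C2: "0 \<le> C2" "\<And>s. \<bar>w s\<bar> \<le> C2" using bfunE[OF assms(2)] by blast
  have "\<forall>s. w s - V s \<le> q ^ n * (C1 + C2)" for n
  proof (induction n)
    case 0
    show ?case
    proof
      fix s show "w s - V s \<le> q ^ 0 * (C1 + C2)" using C1(2)[of s] C2(2)[of s] by (simp add: abs_le_iff)
    qed
  next
    case (Suc n)
    show ?case
    proof
      fix s
      have "w s - V s \<le> F w s - F V s" using assms(3) assms(4)[of s] by (metis diff_left_mono)
      also have "\<dots> \<le> q * (q ^ n * (C1 + C2))"
        using Suc.IH assms C1 C2 q0 by (intro contr) auto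
      finally show "w s - V s \<le> q ^ Suc n * (C1 + C2)" by (simp add: mult.assoc)
    qed
  qed
  then have "w s - V s \<le> 0" using q0 q1 by (intro pow_le0[where q=q and D="C1+C2"]) auto
  then show ?thesis by simp
qed

lemma uniq:
  assumes "bfun f" "bfun h" "F f = f" "F h = h"
  shows "f = h"
proof
  fix s
  show "f s = h s" using ub[OF assms(1,2,4)] ub[OF assms(2,1,3)] assms(3,4)
    by (metis order.refl order_antisym)
qed

end



context contr_op
begin

lemma fix_exists:
  assumes bz: "bfun z"
  shows "\<exists>w. bfun w \<and> F w = w \<and> (\<forall>s. (\<lambda>n. (F ^^ n) z s) \<longlonglongrightarrow> w s)"
proof -
  define x where "x = (\<lambda>n. (F ^^ n) z)"
  have bx: "bfun (x n)" for n by (induction n) (auto simp: x_def bz pres)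
  have xS: "x (Suc n) = F (x n)" for n by (simp add: x_def)
  obtain K0 where K0: "0 \<le> K0" "\<And>s. \<bar>x 0 s\<bar> \<le> K0" using bfunE[OF bx[of 0]] by blast
  obtain K1 where K1: "0 \<le> K1" "\<And>s. \<bar>x 1 s\<bar> \<le> K1" using bfunE[OF bx[of 1]] by blast
  define K where "K = K0 + K1"
  have K: "0 \<le> K" using K0 K1 by (simp add: K_def)
  have step: "\<bar>x (Suc n) s - x n s\<bar> \<le> q ^ n * K" for n s
  proof (induction n arbitrary: s)
    case 0
    show ?case using K0(2)[of s] K1(2)[of s] by (simp add: K_def abs_le_iff)
  next
    case (Suc n)
    have "\<bar>x (Suc (Suc n)) s - x (Suc n) s\<bar> = \<bar>F (x (Suc n)) s - F (x n) s\<bar>" by (simp add: xS)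
    also have "\<dots> \<le> q * (q ^ n * K)"
      using Suc.IH bx K q0 by (intro contr_abs) auto
    finally show ?case by (simp add: mult.assoc)
  qed
  define D where "D n = q ^ n * K / (1 - q)" for n
  have D0: "0 \<le> D n" for n using q0 q1 K by (simp add: D_def)
  have Dmono: "D (Suc n) \<le> D n" for n
    using q0 q1 K by (simp add: D_def divide_right_mono mult_right_le_one_le mult.assoc mult_left_le_one_le)
  have c1: "\<bar>x (n + m) s - x n s\<bar> \<le> K * (q ^ n - q ^ (n + m)) / (1 - q)" for n m s
  proof (induction m)
    case 0 show ?case by simp
  next
    case (Suc m)
    have "\<bar>x (n + Suc m) s - x n s\<bar> \<le> \<bar>x (Suc (n + m)) s - x (n + m) s\<bar> + \<bar>x (n + m) s - x n s\<bar>"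
      by simp
    also have "\<dots> \<le> q ^ (n + m) * K + K * (q ^ n - q ^ (n + m)) / (1 - q)"
      using step[of "n+m" s] Suc.IH by linarith
    also have "\<dots> = K * (q ^ n - q ^ (n + Suc m)) / (1 - q)"
      using q1 by (simp add: field_simps)
    finally show ?case .
  qed
  have c2: "\<bar>x (n + m) s - x n s\<bar> \<le> D n" for n m s
  proof -
    have "K * (q ^ n - q ^ (n + m)) \<le> K * q ^ n" using K q0 by (simp add: mult_left_mono)
    then have "K * (q ^ n - q ^ (n + m)) / (1 - q) \<le> D n" using q1 by (simp add: D_def divide_right_mono mult.commute)
    then show ?thesis using c1[of n m s] by linarith
  qed
  have c3: "m \<ge> n \<Longrightarrow> \<bar>x m s - x n s\<bar> \<le> D n" for m n s
    using c2[of n "m - n" s] by simp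
  have Dlim: "D \<longlonglongrightarrow> 0"
  proof -
    have "(\<lambda>n. q ^ n * (K / (1 - q))) \<longlonglongrightarrow> 0"
      using q0 q1 by (intro tendsto_mult_left_zero LIMSEQ_power_zero) auto
    then show ?thesis by (simp add: D_def[abs_def])
  qed
  have conv: "convergent (\<lambda>n. x n s)" for s
  proof -
    have "Cauchy (\<lambda>n. x n s)"
    proof (rule CauchyI)
      fix e :: real assume e: "0 < e"
      then obtain M where M: "\<forall>n\<ge>M. norm (D n - 0) < e / 2"
        using Dlim unfolding LIMSEQ_iff by (meson half_gt_zero)
      then have "D M < e / 2" using D0[of M] by auto
      have "\<forall>m\<ge>M. \<forall>n\<ge>M. norm (x m s - x n s) < e"
      proof (intro allI impI)
        fix m n assume mn: "M \<le> m" "M \<le> n"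
        have "\<bar>x m s - x M s\<bar> \<le> D M" "\<bar>x n s - x M s\<bar> \<le> D M" using c3 mn by auto
        moreover have "\<bar>(x m s - x M s) - (x n s - x M s)\<bar> \<le> \<bar>x m s - x M s\<bar> + \<bar>x n s - x M s\<bar>"
          by (rule abs_triangle_ineq4)
        ultimately show "norm (x m s - x n s) < e" using \<open>D M < e / 2\<close> unfolding real_norm_def by simp
      qed
      then show "\<exists>M. \<forall>m\<ge>M. \<forall>n\<ge>M. norm (x m s - x n s) < e" by blast
    qed
    then show ?thesis by (simp add: Cauchy_convergent_iff)
  qed
  define w where "w s = lim (\<lambda>n. x n s)" for s
  have wlim: "(\<lambda>n. x n s) \<longlonglongrightarrow> w s" for s
    using conv[of s] by (simp add: w_def convergent_LIMSEQ_iff)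
  have tail: "\<bar>w s - x n s\<bar> \<le> D n" for n s
  proof -
    have "(\<lambda>m. x (m + n) s) \<longlonglongrightarrow> w s" by (rule LIMSEQ_ignore_initial_segment[OF wlim])
    then have "(\<lambda>m. \<bar>x (m + n) s - x n s\<bar>) \<longlonglongrightarrow> \<bar>w s - x n s\<bar>"
      by (intro tendsto_rabs tendsto_diff tendsto_const)
    moreover have "\<exists>N. \<forall>m\<ge>N. \<bar>x (m + n) s - x n s\<bar> \<le> D n"
      using c2[of n _ s] by (auto simp: add.commute)
    ultimately show ?thesis by (rule LIMSEQ_le_const2)
  qed
  have bw: "bfun w"
  proof (rule bfunI)
    fix s show "\<bar>w s\<bar> \<le> K0 + D 0" using tail[of s 0] K0(2)[of s] by linarith
  qed
  have fixw: "F w s = w s" for s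
  proof -
    have "\<bar>F w s - w s\<bar> \<le> q ^ n * (2 * K / (1 - q))" for n
    proof -
      have "\<bar>F w s - x (Suc n) s\<bar> \<le> q * D n"
        unfolding xS using bw bx D0 tail by (intro contr_abs) auto
      moreover have "\<bar>x (Suc n) s - w s\<bar> \<le> D n" using tail[of s "Suc n"] Dmono[of n] by linarith
      moreover have "q * D n \<le> D n" using q0 q1 D0[of n] by (intro mult_left_le_one_le) auto
      ultimately have "\<bar>F w s - w s\<bar> \<le> 2 * D n" by linarith
      then show ?thesis by (simp add: D_def mult.left_commute)
    qed
    then have "\<bar>F w s - w s\<bar> \<le> 0" using q0 q1 by (intro pow_le0[where D="2 * K / (1 - q)"]) auto
    then show ?thesis by simp
  qed
  show ?thesis using bw fixw wlim unfolding x_def by blast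
qed

end



definition Tp :: "('a::finite \<Rightarrow> 's \<Rightarrow> 's pmf) \<Rightarrow> ('s \<Rightarrow> 'a pmf) \<Rightarrow> ('s \<Rightarrow> 'a \<Rightarrow> real) \<Rightarrow> real \<Rightarrow> real
    \<Rightarrow> ('s \<Rightarrow> 'a pmf) \<Rightarrow> ('s \<Rightarrow> bool) \<Rightarrow> ('s \<Rightarrow> real) \<Rightarrow> 's \<Rightarrow> real" where
  "Tp P pie L bet gam pix g w s =
    (\<Sum>a\<in>UNIV. pmf (act pie pix g s) a * (sw_reward L bet g (s, a) + gam * measure_pmf.expectation (P a s) w))"

lemma reward_bound:
  assumes "\<And>s a. \<bar>L s a\<bar> \<le> B"
  shows "\<bar>sw_reward L bet g x\<bar> \<le> B + \<bar>bet\<bar>"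
  using assms[of "fst x" "snd x"] unfolding sw_reward_def by (auto simp: abs_le_iff)

lemma Tp_bfun:
  assumes "\<And>s a. \<bar>L s a\<bar> \<le> B" "0 \<le> gam" "bfun w"
  shows "bfun (Tp P pie L bet gam pix g w)"
proof -
  obtain C where C: "0 \<le> C" "\<And>s. \<bar>w s\<bar> \<le> C" using bfunE[OF assms(3)] by blast
  have e: "\<bar>measure_pmf.expectation p w\<bar> \<le> C" for p by (rule exp_bound) (rule C(2))
  let ?M = "B + \<bar>bet\<bar> + gam * C"
  have bnd: "\<bar>sw_reward L bet g (s, a) + gam * measure_pmf.expectation (P a s) w\<bar> \<le> ?M" for s a
  proof -
    have "\<bar>gam * measure_pmf.expectation (P a s) w\<bar> \<le> gam * C"
      using e[of "P a s"] assms(2) by (simp add: abs_mult mult_left_mono)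
    then show ?thesis using reward_bound[where L=L and B=B and bet=bet and g=g and x="(s,a)", OF assms(1)] by (simp add: abs_le_iff)
  qed
  show ?thesis
  proof (rule bfunI)
    fix s
    have "Tp P pie L bet gam pix g w s \<le> (\<Sum>a\<in>UNIV. pmf (act pie pix g s) a * ?M)"
      unfolding Tp_def using bnd by (intro sum_pmf_mono) (auto simp: abs_le_iff)
    moreover have "(\<Sum>a\<in>UNIV. pmf (act pie pix g s) a * (- ?M)) \<le> Tp P pie L bet gam pix g w s"
      unfolding Tp_def
    proof (rule sum_pmf_mono)
      fix a show "- ?M \<le> sw_reward L bet g (s, a) + gam * measure_pmf.expectation (P a s) w"
        using bnd[of s a] by (simp only: abs_le_iff) linarith
    qed
    ultimately show "\<bar>Tp P pie L bet gam pix g w s\<bar> \<le> ?M" by (simp add: sum_pmf_const abs_le_iff)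
  qed
qed

lemma exp_diff_le:
  assumes "bfun f" "bfun h" "\<And>s. f s - h s \<le> c"
  shows "measure_pmf.expectation p f - measure_pmf.expectation p h \<le> c"
proof -
  obtain C1 where C1: "\<And>s. \<bar>f s\<bar> \<le> C1" using bfunE[OF assms(1)] by blast
  obtain C2 where C2: "\<And>s. \<bar>h s\<bar> \<le> C2" using bfunE[OF assms(2)] by blast
  have "measure_pmf.expectation p f - measure_pmf.expectation p h = measure_pmf.expectation p (\<lambda>s. f s - h s)"
    by (rule Bochner_Integration.integral_diff[symmetric]) (auto intro: bfun_integrable assms)
  also have "\<dots> \<le> measure_pmf.expectation p (\<lambda>s. c)"
  proof (rule exp_mono[where Ca="C1 + C2" and Cb="\<bar>c\<bar>"])
    fix s show "\<bar>f s - h s\<bar> \<le> C1 + C2" using C1[of s] C2[of s] by (simp add: abs_le_iff)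
  qed (auto simp: assms)
  finally show ?thesis by simp
qed

lemma Tp_contr:
  assumes "0 \<le> gam" "bfun f" "bfun h" "\<And>s. f s - h s \<le> c"
  shows "Tp P pie L bet gam pix g f s - Tp P pie L bet gam pix g h s \<le> gam * c"
proof -
  have "Tp P pie L bet gam pix g f s - Tp P pie L bet gam pix g h s =
     (\<Sum>a\<in>UNIV. pmf (act pie pix g s) a * (gam * (measure_pmf.expectation (P a s) f - measure_pmf.expectation (P a s) h)))"
    unfolding Tp_def by (simp add: sum_subtractf[symmetric] algebra_simps)
  also have "\<dots> \<le> (\<Sum>a\<in>UNIV. pmf (act pie pix g s) a * (gam * c))"
  proof (rule sum_pmf_mono)
    fix a show "gam * (measure_pmf.expectation (P a s) f - measure_pmf.expectation (P a s) h) \<le> gam * c"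
      by (intro mult_left_mono exp_diff_le assms)
  qed
  finally show ?thesis by (simp only: sum_pmf_const)
qed

lemma Tp_contr_op:
  assumes "\<And>s a. \<bar>L s a\<bar> \<le> B" "0 \<le> gam" "gam < 1"
  shows "contr_op (Tp P pie L bet gam pix g) gam"
  by unfold_locales (auto intro: Tp_bfun Tp_contr assms)

lemma disc_return_Cons:
  "disc_return L bet gam g (x # xs) = sw_reward L bet g x + gam * disc_return L bet gam g xs"
  unfolding disc_return_def length_Cons sum.lessThan_Suc_shift by (simp add: sum_distrib_left mult.assoc)

lemma disc_return_bound:
  assumes "\<And>x. \<bar>sw_reward L bet g x\<bar> \<le> C" "0 \<le> gam" "gam < 1"
  shows "\<bar>disc_return L bet gam g xs\<bar> \<le> C / (1 - gam)"
proof (induction xs)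
  case Nil
  have "0 \<le> C" using assms(1) by (meson abs_ge_zero order_trans)
  then show ?case using assms by (simp add: disc_return_def)
next
  case (Cons x xs)
  have "\<bar>disc_return L bet gam g (x # xs)\<bar> \<le> \<bar>sw_reward L bet g x\<bar> + \<bar>gam * disc_return L bet gam g xs\<bar>"
    unfolding disc_return_Cons by (rule abs_triangle_ineq)
  also have "\<dots> \<le> C + gam * (C / (1 - gam))"
  proof (rule add_mono)
    show "\<bar>sw_reward L bet g x\<bar> \<le> C" by (rule assms(1))
    show "\<bar>gam * disc_return L bet gam g xs\<bar> \<le> gam * (C / (1 - gam))"
      unfolding abs_mult abs_of_nonneg[OF assms(2)] using Cons.IH assms(2) by (rule mult_left_mono)
  qed
  also have "\<dots> = C / (1 - gam)" using assms by (simp add: field_simps)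
  finally show ?case .
qed

lemma E_traj_Suc:
  fixes P :: "'a::finite \<Rightarrow> 's \<Rightarrow> 's pmf"
  assumes rb: "\<And>x. \<bar>sw_reward L bet g x\<bar> \<le> C" and gam: "0 \<le> gam" "gam < 1"
  shows "measure_pmf.expectation (traj P pie pix g (Suc n) s) (disc_return L bet gam g) =
         Tp P pie L bet gam pix g (\<lambda>s'. measure_pmf.expectation (traj P pie pix g n s') (disc_return L bet gam g)) s"
proof -
  let ?f = "disc_return L bet gam g"
  let ?En = "\<lambda>s'. measure_pmf.expectation (traj P pie pix g n s') ?f"
  have fb: "\<And>xs. \<bar>?f xs\<bar> \<le> C / (1 - gam)" by (rule disc_return_bound[OF rb gam])
  have Eb: "\<bar>?En s'\<bar> \<le> C / (1 - gam)" for s' by (rule exp_bound[OF fb])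
  have 1: "measure_pmf.expectation (bind_pmf (traj P pie pix g n s') (\<lambda>xs. return_pmf ((s, a) # xs))) ?f
      = sw_reward L bet g (s, a) + gam * ?En s'" for a s'
  proof -
    have "measure_pmf.expectation (bind_pmf (traj P pie pix g n s') (\<lambda>xs. return_pmf ((s, a) # xs))) ?f
        = measure_pmf.expectation (traj P pie pix g n s') (\<lambda>xs. sw_reward L bet g (s, a) + gam * ?f xs)"
      by (subst expectation_bind_bdd[OF fb]) (simp add: disc_return_Cons)
    also have "\<dots> = sw_reward L bet g (s, a) + gam * ?En s'"
      by (subst Bochner_Integration.integral_add)
         (auto intro!: pmf_integrable_bdd[OF fb] simp: measure_pmf.prob_space)
    finally show ?thesis .
  qed
  have 2: "measure_pmf.expectation (bind_pmf (P a s) (\<lambda>s'. bind_pmf (traj P pie pix g n s') (\<lambda>xs. return_pmf ((s, a) # xs)))) ?f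
      = sw_reward L bet g (s, a) + gam * measure_pmf.expectation (P a s) ?En" for a
  proof -
    have "measure_pmf.expectation (bind_pmf (P a s) (\<lambda>s'. bind_pmf (traj P pie pix g n s') (\<lambda>xs. return_pmf ((s, a) # xs)))) ?f
        = measure_pmf.expectation (P a s) (\<lambda>s'. sw_reward L bet g (s, a) + gam * ?En s')"
      by (subst expectation_bind_bdd[OF fb]) (simp add: 1)
    also have "\<dots> = sw_reward L bet g (s, a) + gam * measure_pmf.expectation (P a s) ?En"
      by (subst Bochner_Integration.integral_add)
         (auto intro!: pmf_integrable_bdd[OF Eb] simp: measure_pmf.prob_space)
    finally show ?thesis .
  qed
  have "measure_pmf.expectation (traj P pie pix g (Suc n) s) ?f
      = measure_pmf.expectation (act pie pix g s) (\<lambda>a. sw_reward L bet g (s, a) + gam * measure_pmf.expectation (P a s) ?En)"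
    by (simp only: traj.simps) (subst expectation_bind_bdd[OF fb], simp add: 2)
  also have "\<dots> = Tp P pie L bet gam pix g ?En s"
    unfolding Tp_def by (subst integral_measure_pmf_real[where A=UNIV]) (auto simp: mult.commute)
  finally show ?thesis .
qed

lemma E_traj_iter:
  fixes P :: "'a::finite \<Rightarrow> 's \<Rightarrow> 's pmf"
  assumes rb: "\<And>x. \<bar>sw_reward L bet g x\<bar> \<le> C" and gam: "0 \<le> gam" "gam < 1"
  shows "(\<lambda>s. measure_pmf.expectation (traj P pie pix g n s) (disc_return L bet gam g)) =
         (Tp P pie L bet gam pix g ^^ n) (\<lambda>_. 0)"
proof (induction n)
  case 0
  show ?case by (simp add: disc_return_def)
next
  case (Suc n)
  show ?case by (simp add: E_traj_Suc[OF rb gam] Suc.IH[symmetric] del: traj.simps)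
qed

lemma sw_value_fix:
  fixes P :: "'a::finite \<Rightarrow> 's \<Rightarrow> 's pmf"
  assumes "\<And>s a. \<bar>L s a\<bar> \<le> B" "0 \<le> gam" "gam < 1"
  shows "bfun (sw_value P pie L bet gam pix g) \<and>
         Tp P pie L bet gam pix g (sw_value P pie L bet gam pix g) = sw_value P pie L bet gam pix g"
proof -
  interpret contr_op "Tp P pie L bet gam pix g" gam by (rule Tp_contr_op[OF assms])
  obtain w where w: "bfun w" "Tp P pie L bet gam pix g w = w"
     "\<And>s. (\<lambda>n. (Tp P pie L bet gam pix g ^^ n) (\<lambda>_. 0) s) \<longlonglongrightarrow> w s"
  proof -
    have b0: "bfun (\<lambda>_::'s. 0::real)" by (rule bfunI[where C=0]) simp
    show ?thesis using fix_exists[OF b0] that by blast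
  qed
  have "sw_value P pie L bet gam pix g = w"
  proof
    fix s
    have "sw_value P pie L bet gam pix g s = lim (\<lambda>n. (Tp P pie L bet gam pix g ^^ n) (\<lambda>_. 0) s)"
      unfolding sw_value_def
      using fun_cong[OF E_traj_iter[OF reward_bound[where L=L and B=B, OF assms(1)] assms(2,3)]] by presburger
    also have "\<dots> = w s" using w(3) by (rule limI)
    finally show "sw_value P pie L bet gam pix g s = w s" .
  qed
  then show ?thesis using w by simp
qed

lemma sw_value_unique:
  fixes P :: "'a::finite \<Rightarrow> 's \<Rightarrow> 's pmf"
  assumes "\<And>s a. \<bar>L s a\<bar> \<le> B" "0 \<le> gam" "gam < 1"
    and "bfun w" "Tp P pie L bet gam pix g w = w"
  shows "sw_value P pie L bet gam pix g = w"
proof -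
  interpret contr_op "Tp P pie L bet gam pix g" gam by (rule Tp_contr_op[OF assms(1-3)])
  show ?thesis using sw_value_fix[where L=L and B=B and P=P and pie=pie and bet=bet and pix=pix and g=g, OF assms(1-3)] assms(4,5) uniq by blast
qed



definition Qv :: "('a::finite \<Rightarrow> 's \<Rightarrow> 's pmf) \<Rightarrow> ('s \<Rightarrow> 'a \<Rightarrow> real) \<Rightarrow> real \<Rightarrow> ('s \<Rightarrow> real) \<Rightarrow> 's \<Rightarrow> 'a \<Rightarrow> real" where
  "Qv P L gam w s a = - L s a + gam * measure_pmf.expectation (P a s) w"

definition Nv :: "('a::finite \<Rightarrow> 's \<Rightarrow> 's pmf) \<Rightarrow> ('s \<Rightarrow> 'a pmf) \<Rightarrow> ('s \<Rightarrow> 'a \<Rightarrow> real) \<Rightarrow> real \<Rightarrow> ('s \<Rightarrow> real) \<Rightarrow> 's \<Rightarrow> real" where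
  "Nv P pie L gam w s = (\<Sum>a\<in>UNIV. pmf (pie s) a * Qv P L gam w s a)"

definition Opt :: "('a::finite \<Rightarrow> 's \<Rightarrow> 's pmf) \<Rightarrow> ('s \<Rightarrow> 'a pmf) \<Rightarrow> 'a set \<Rightarrow> ('s \<Rightarrow> 'a \<Rightarrow> real) \<Rightarrow> real \<Rightarrow> real
    \<Rightarrow> ('s \<Rightarrow> real) \<Rightarrow> 's \<Rightarrow> real" where
  "Opt P pie Ax L bet gam w s = Max (insert (Nv P pie L gam w s) ((\<lambda>a. Qv P L gam w s a - bet) ` Ax))"

lemma Mop_Qv: "Mop P L bet gam pix w s = (\<Sum>a\<in>UNIV. pmf (pix s) a * (Qv P L gam w s a - bet))"
  unfolding Mop_def Qv_def by (rule sum.cong) (simp_all add: algebra_simps)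

lemma Tp_cases:
  "Tp P pie L bet gam pix g w s = (if g s then Mop P L bet gam pix w s else Nv P pie L gam w s)"
  unfolding Tp_def Mop_Qv Nv_def Qv_def act_def sw_reward_def by (auto intro!: sum.cong simp: algebra_simps)

lemma Nv_Tp: "Nv P pie L gam w s = Tp P pie L bet gam pix (\<lambda>_. False) w s"
  by (simp add: Tp_cases)

lemma Max_abs_bound:
  fixes S :: "real set"
  assumes "finite S" "S \<noteq> {}" "\<And>x. x \<in> S \<Longrightarrow> \<bar>x\<bar> \<le> M"
  shows "\<bar>Max S\<bar> \<le> M"
  using Max_in[OF assms(1,2)] assms(3) by blast

lemma Opt_contr_op:
  fixes P :: "'a::finite \<Rightarrow> 's \<Rightarrow> 's pmf"
  assumes Lb: "\<And>s a. \<bar>L s a\<bar> \<le> B" and gam: "0 \<le> gam" "gam < 1"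
  shows "contr_op (Opt P pie Ax L bet gam) gam"
proof
  show "0 \<le> gam" "gam < 1" by (fact gam)+
next
  fix f :: "'s \<Rightarrow> real" assume bf: "bfun f"
  obtain C where C: "0 \<le> C" "\<And>s. \<bar>f s\<bar> \<le> C" using bfunE[OF bf] by blast
  have bN: "bfun (Nv P pie L gam f)"
  proof -
    have "Nv P pie L gam f = Tp P pie L 0 gam pie (\<lambda>_. False) f" by (rule ext) (rule Nv_Tp)
    then show ?thesis using Tp_bfun[OF Lb gam(1) bf] by simp
  qed
  obtain CN where CN: "0 \<le> CN" "\<And>s. \<bar>Nv P pie L gam f s\<bar> \<le> CN" using bfunE[OF bN] by blast
  have Qb: "\<bar>Qv P L gam f s a - bet\<bar> \<le> B + gam * C + \<bar>bet\<bar>" for s a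
  proof -
    have "\<bar>measure_pmf.expectation (P a s) f\<bar> \<le> C" by (rule exp_bound) (rule C(2))
    then have "\<bar>gam * measure_pmf.expectation (P a s) f\<bar> \<le> gam * C"
      using gam by (simp add: abs_mult mult_left_mono)
    then show ?thesis using Lb[of s a] abs_ge_self[of bet] abs_ge_minus_self[of bet] unfolding Qv_def abs_le_iff by linarith
  qed
  show "bfun (Opt P pie Ax L bet gam f)"
  proof (rule bfunI)
    fix s
    show "\<bar>Opt P pie Ax L bet gam f s\<bar> \<le> \<bar>CN\<bar> + (B + gam * C + \<bar>bet\<bar>)"
      unfolding Opt_def
    proof (rule Max_abs_bound)
      fix x assume "x \<in> insert (Nv P pie L gam f s) ((\<lambda>a. Qv P L gam f s a - bet) ` Ax)"
      then show "\<bar>x\<bar> \<le> \<bar>CN\<bar> + (B + gam * C + \<bar>bet\<bar>)"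
      proof
        have B0: "0 \<le> B" using Lb by (meson abs_ge_zero order_trans)
        assume "x = Nv P pie L gam f s"
        then show ?thesis using CN(2)[of s] B0 mult_nonneg_nonneg[OF gam(1) C(1)] abs_ge_zero[of bet] abs_ge_self[of CN] by simp
      next
        assume "x \<in> (\<lambda>a. Qv P L gam f s a - bet) ` Ax"
        then obtain a where "x = Qv P L gam f s a - bet" by blast
        then show ?thesis using Qb[of s a] abs_ge_zero[of CN] by linarith
      qed
    qed auto
  qed
next
  fix f h :: "'s \<Rightarrow> real" and c s
  assume bf: "bfun f" and bh: "bfun h" and c: "0 \<le> c" and fh: "\<And>s. f s - h s \<le> c"
  have Qd: "Qv P L gam f s a - Qv P L gam h s a \<le> gam * c" for a
  proof -
    have "gam * (measure_pmf.expectation (P a s) f - measure_pmf.expectation (P a s) h) \<le> gam * c"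
      by (intro mult_left_mono exp_diff_le bf bh fh gam)
    then show ?thesis unfolding Qv_def by (simp add: algebra_simps)
  qed
  have Nd: "Nv P pie L gam f s - Nv P pie L gam h s \<le> gam * c"
    unfolding Nv_Tp[where bet=0 and pix=pie] by (rule Tp_contr[OF gam(1) bf bh fh])
  let ?Sf = "insert (Nv P pie L gam f s) ((\<lambda>a. Qv P L gam f s a - bet) ` Ax)"
  let ?Sh = "insert (Nv P pie L gam h s) ((\<lambda>a. Qv P L gam h s a - bet) ` Ax)"
  have fin: "finite ?Sh" by simp
  have "Max ?Sf \<in> ?Sf" by (rule Max_in) auto
  then have "Max ?Sf \<le> Max ?Sh + gam * c"
  proof
    assume "Max ?Sf = Nv P pie L gam f s"
    moreover have "Nv P pie L gam h s \<le> Max ?Sh" by (rule Max_ge[OF fin]) simp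
    ultimately show ?thesis using Nd by linarith
  next
    assume "Max ?Sf \<in> (\<lambda>a. Qv P L gam f s a - bet) ` Ax"
    then obtain a where a: "a \<in> Ax" "Max ?Sf = Qv P L gam f s a - bet" by blast
    moreover have "Qv P L gam h s a - bet \<le> Max ?Sh" by (rule Max_ge[OF fin]) (use a in auto)
    ultimately show ?thesis using Qd[of a] by linarith
  qed
  then show "Opt P pie Ax L bet gam f s - Opt P pie Ax L bet gam h s \<le> gam * c"
    unfolding Opt_def by linarith
qed

lemma sw_value_le0:
  fixes P :: "'a::finite \<Rightarrow> 's \<Rightarrow> 's pmf"
  assumes "\<And>s a. 0 \<le> L s a" "\<And>s a. L s a \<le> B" "0 \<le> bet" "0 \<le> gam" "gam < 1"
  shows "sw_value P pie L bet gam pix g s \<le> 0"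
proof -
  have Lb: "\<bar>L s a\<bar> \<le> B" for s a using assms(1,2)[of s a] by simp
  interpret contr_op "Tp P pie L bet gam pix g" gam by (rule Tp_contr_op[OF Lb assms(4,5)])
  note V = sw_value_fix[where L=L and B=B and P=P and pie=pie and bet=bet and pix=pix and g=g, OF Lb assms(4,5)]
  have b0: "bfun (\<lambda>_::'s. 0::real)" by (rule bfunI[where C=0]) simp
  have "Tp P pie L bet gam pix g (\<lambda>_. 0) s' \<le> 0" for s'
  proof -
    have "Tp P pie L bet gam pix g (\<lambda>_. 0) s' \<le> (\<Sum>a\<in>UNIV. pmf (act pie pix g s') a * 0)"
      unfolding Tp_def
    proof (rule sum_pmf_mono)
      fix a show "sw_reward L bet g (s', a) + gam * measure_pmf.expectation (P a s') (\<lambda>_. 0) \<le> 0"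
        using assms(1)[of s' a] assms(3) by (simp add: sw_reward_def)
    qed
    then show ?thesis by simp
  qed
  from lb[OF b0 conjunct1[OF V] conjunct2[OF V] this] show ?thesis .
qed

lemma sw_value_never:
  fixes P :: "'a::finite \<Rightarrow> 's \<Rightarrow> 's pmf"
  assumes "\<And>s a. 0 \<le> L s a" "\<And>s a. L s a \<le> l" "0 \<le> gam" "gam < 1"
  shows "- l / (1 - gam) \<le> sw_value P pie L bet gam pix (\<lambda>_. False) s"
proof -
  have Lb: "\<bar>L s a\<bar> \<le> l" for s a using assms(1,2)[of s a] by simp
  interpret contr_op "Tp P pie L bet gam pix (\<lambda>_. False)" gam by (rule Tp_contr_op[OF Lb assms(3,4)])
  note V = sw_value_fix[where L=L and B=l and P=P and pie=pie and bet=bet and pix=pix and g="\<lambda>_. False", OF Lb assms(3,4)]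
  have b0: "bfun (\<lambda>_::'s. - l / (1 - gam))" by (rule bfunI[where C="\<bar>l / (1 - gam)\<bar>"]) simp
  have "- l / (1 - gam) \<le> Tp P pie L bet gam pix (\<lambda>_. False) (\<lambda>_. - l / (1 - gam)) s'" for s'
  proof -
    have "(\<Sum>a\<in>UNIV. pmf (pie s') a * (- l + gam * (- l / (1 - gam)))) \<le> Tp P pie L bet gam pix (\<lambda>_. False) (\<lambda>_. - l / (1 - gam)) s'"
      unfolding Tp_def act_def if_False
    proof (rule sum_pmf_mono)
      fix a show "- l + gam * (- l / (1 - gam)) \<le> sw_reward L bet (\<lambda>_. False) (s', a) + gam * measure_pmf.expectation (P a s') (\<lambda>_. - l / (1 - gam))"
        using assms(2)[of s' a] by (simp add: sw_reward_def)
    qed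
    moreover have "- l + gam * (- l / (1 - gam)) = - l / (1 - gam)" using assms(4) by (simp add: field_simps)
    ultimately show ?thesis by (simp add: sum_pmf_const)
  qed
  from ub[OF b0 conjunct1[OF V] conjunct2[OF V] this] show ?thesis .
qed

lemma sw_value_interv:
  fixes P :: "'a::finite \<Rightarrow> 's \<Rightarrow> 's pmf"
  assumes "\<And>s a. 0 \<le> L s a" "\<And>s a. L s a \<le> B" "0 \<le> bet" "0 \<le> gam" "gam < 1" "g s"
  shows "sw_value P pie L bet gam pix g s \<le> - bet"
proof -
  have Lb: "\<bar>L s a\<bar> \<le> B" for s a using assms(1,2)[of s a] by simp
  note V = sw_value_fix[where L=L and B=B and P=P and pie=pie and bet=bet and pix=pix and g=g, OF Lb assms(4,5)]
  let ?V = "sw_value P pie L bet gam pix g"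
  obtain C where C: "\<And>s. \<bar>?V s\<bar> \<le> C" using bfunE[OF conjunct1[OF V]] by blast
  have EV: "measure_pmf.expectation p ?V \<le> 0" for p
  proof -
    have "measure_pmf.expectation p ?V \<le> measure_pmf.expectation p (\<lambda>_. 0)"
      by (rule exp_mono[where Ca=C and Cb=0]) (use C sw_value_le0[OF assms(1-5)] in auto)
    then show ?thesis by simp
  qed
  have "?V s = Tp P pie L bet gam pix g ?V s" using conjunct2[OF V] by simp
  also have "\<dots> \<le> (\<Sum>a\<in>UNIV. pmf (act pie pix g s) a * (- bet))"
    unfolding Tp_def
  proof (rule sum_pmf_mono)
    fix a show "sw_reward L bet g (s, a) + gam * measure_pmf.expectation (P a s) ?V \<le> - bet"
      using assms(1)[of s a] assms(6) mult_nonneg_nonpos[OF assms(4) EV[of "P a s"]] by (simp add: sw_reward_def)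
  qed
  finally show ?thesis by (simp only: sum_pmf_const)
qed



lemma part_i:
  fixes P :: "'a::finite \<Rightarrow> 's::countable \<Rightarrow> 's pmf"
    and pie :: "'s \<Rightarrow> 'a pmf" and Ax :: "'a set" and L :: "'s \<Rightarrow> 'a \<Rightarrow> real"
  assumes Ax_ne: "Ax \<noteq> {}" and gam: "0 < gam" "gam < 1"
    and L_nonneg: "\<forall>s a. 0 \<le> L s a" and LB: "\<forall>s a. L s a \<le> B"
  shows "(\<exists>pix g. optimal_pair P pie Ax L bet gam pix g) \<and>
      (\<forall>pix g. optimal_pair P pie Ax L bet gam pix g \<longrightarrow>
         optimal_pair P pie Ax L bet gam pix
           (\<lambda>s. Mop P L bet gam pix (v_opt P pie Ax L bet gam) s = v_opt P pie Ax L bet gam s))"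
proof -
  have Lb: "\<bar>L s a\<bar> \<le> B" for s a using L_nonneg LB by (metis abs_of_nonneg)
  have g0: "0 \<le> gam" using gam by simp
  interpret O: contr_op "Opt P pie Ax L bet gam" gam by (rule Opt_contr_op[OF Lb g0 gam(2)])
  have b0: "bfun (\<lambda>_::'s. 0::real)" by (rule bfunI[where C=0]) simp
  obtain wst where bw: "bfun wst" and fw: "Opt P pie Ax L bet gam wst = wst"
    using O.fix_exists[OF b0] by blast
  define gs where "gs s = (\<exists>a\<in>Ax. Qv P L gam wst s a - bet = wst s)" for s
  define as where "as s = (SOME a. a \<in> Ax \<and> (gs s \<longrightarrow> Qv P L gam wst s a - bet = wst s))" for s
  have as: "as s \<in> Ax \<and> (gs s \<longrightarrow> Qv P L gam wst s (as s) - bet = wst s)" for s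
  proof -
    have "\<exists>a. a \<in> Ax \<and> (gs s \<longrightarrow> Qv P L gam wst s a - bet = wst s)"
    proof (cases "gs s")
      case True then show ?thesis unfolding gs_def by blast
    next
      case False then show ?thesis using Ax_ne by blast
    qed
    then show ?thesis unfolding as_def by (rule someI_ex)
  qed
  define pst where "pst s = return_pmf (as s)" for s
  have adm: "adm_xplr Ax pst" unfolding adm_xplr_def pst_def using as by auto
  have Tfix: "Tp P pie L bet gam pst gs wst = wst"
  proof
    fix s
    show "Tp P pie L bet gam pst gs wst s = wst s"
    proof (cases "gs s")
      case True
      have "Tp P pie L bet gam pst gs wst s = Qv P L gam wst s (as s) - bet"
        using True unfolding Tp_cases Mop_Qv pst_def by (simp add: sum_pmf_return)
      then show ?thesis using as[of s] True by simp
    next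
      case False
      let ?S = "insert (Nv P pie L gam wst s) ((\<lambda>a. Qv P L gam wst s a - bet) ` Ax)"
      have "wst s = Max ?S" using fun_cong[OF fw, of s] unfolding Opt_def by simp
      moreover have "Max ?S \<in> ?S" by (rule Max_in) auto
      ultimately have "wst s \<in> ?S" by simp
      then have "wst s = Nv P pie L gam wst s" using False unfolding gs_def by force
      then show ?thesis using False by (simp add: Tp_cases)
    qed
  qed
  have Vst: "sw_value P pie L bet gam pst gs = wst"
    by (rule sw_value_unique[OF Lb g0 gam(2) bw Tfix])
  have dom: "sw_value P pie L bet gam pix g s \<le> wst s" if "adm_xplr Ax pix" for pix g s
  proof -
    note V = sw_value_fix[where L=L and B=B and P=P and pie=pie and bet=bet and pix=pix and g=g, OF Lb g0 gam(2)]
    let ?V = "sw_value P pie L bet gam pix g"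
    have "?V s' \<le> Opt P pie Ax L bet gam ?V s'" for s'
    proof -
      let ?S = "insert (Nv P pie L gam ?V s') ((\<lambda>a. Qv P L gam ?V s' a - bet) ` Ax)"
      have fin: "finite ?S" by simp
      have "?V s' = Tp P pie L bet gam pix g ?V s'" using conjunct2[OF V] by simp
      also have "\<dots> \<le> Max ?S"
      proof (cases "g s'")
        case True
        have "Mop P L bet gam pix ?V s' \<le> (\<Sum>a\<in>UNIV. pmf (pix s') a * Max ?S)"
          unfolding Mop_Qv
        proof (rule sum_mono)
          fix a
          show "pmf (pix s') a * (Qv P L gam ?V s' a - bet) \<le> pmf (pix s') a * Max ?S"
          proof (cases "a \<in> set_pmf (pix s')")
            case True
            then have "a \<in> Ax" using that unfolding adm_xplr_def by blast
            then have "Qv P L gam ?V s' a - bet \<le> Max ?S" by (intro Max_ge[OF fin]) auto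
            then show ?thesis by (intro mult_left_mono) auto
          next
            case False
            then show ?thesis by (simp add: set_pmf_iff)
          qed
        qed
        then show ?thesis using True by (simp add: Tp_cases sum_pmf_const)
      next
        case False
        then show ?thesis by (simp add: Tp_cases Max_ge[OF fin])
      qed
      finally show ?thesis unfolding Opt_def .
    qed
    then show ?thesis using O.ub[OF conjunct1[OF V] bw fw] by blast
  qed
  have vopt: "v_opt P pie Ax L bet gam s = wst s" for s
  proof -
    let ?A = "{pg. adm_xplr Ax (fst pg)}"
    let ?f = "\<lambda>pg. sw_value P pie L bet gam (fst pg) (snd pg) s"
    have mem: "(pst, gs) \<in> ?A" using adm by simp
    have le: "?f pg \<le> wst s" if "pg \<in> ?A" for pg using dom that by simp
    have "(SUP pg\<in>?A. ?f pg) \<le> wst s" using mem le by (intro cSUP_least) auto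
    moreover have "?f (pst, gs) \<le> (SUP pg\<in>?A. ?f pg)"
      by (rule cSUP_upper[OF mem]) (rule bdd_aboveI[where M="wst s"], use le in auto)
    ultimately show ?thesis unfolding v_opt_def using Vst by simp
  qed
  have vw: "v_opt P pie Ax L bet gam = wst" using vopt by (rule ext)
  have E1: "\<exists>pix g. optimal_pair P pie Ax L bet gam pix g"
    using adm Vst vw unfolding optimal_pair_def by auto
  have E2: "optimal_pair P pie Ax L bet gam pix
           (\<lambda>s. Mop P L bet gam pix (v_opt P pie Ax L bet gam) s = v_opt P pie Ax L bet gam s)"
    if op: "optimal_pair P pie Ax L bet gam pix g" for pix g
  proof -
    note V = sw_value_fix[where L=L and B=B and P=P and pie=pie and bet=bet and pix=pix and g=g, OF Lb g0 gam(2)]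
    have adm': "adm_xplr Ax pix" using op unfolding optimal_pair_def by simp
    have Vw: "sw_value P pie L bet gam pix g = wst"
      using op vw unfolding optimal_pair_def by auto
    have T1: "Tp P pie L bet gam pix g wst = wst" using conjunct2[OF V] Vw by simp
    define g' where "g' s = (Mop P L bet gam pix wst s = wst s)" for s
    have T2: "Tp P pie L bet gam pix g' wst = wst"
    proof
      fix s
      show "Tp P pie L bet gam pix g' wst s = wst s"
      proof (cases "g' s")
        case True then show ?thesis by (simp add: Tp_cases g'_def)
      next
        case False
        have ng: "\<not> g s"
        proof
          assume "g s"
          then have "Mop P L bet gam pix wst s = wst s" using fun_cong[OF T1, of s] by (simp add: Tp_cases)
          then show False using False by (simp add: g'_def)
        qed
        have "Tp P pie L bet gam pix g' wst s = Nv P pie L gam wst s" using False by (simp add: Tp_cases)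
        also have "\<dots> = wst s" using fun_cong[OF T1, of s] ng by (simp add: Tp_cases)
        finally show ?thesis .
      qed
    qed
    have "sw_value P pie L bet gam pix g' = wst"
      by (rule sw_value_unique[OF Lb g0 gam(2) bw T2])
    then show ?thesis using adm' vw unfolding optimal_pair_def g'_def by simp
  qed
  show ?thesis using E1 E2 by blast
qed

lemma part_ii:
  fixes P :: "'a::finite \<Rightarrow> 's::countable \<Rightarrow> 's pmf"
    and pie :: "'s \<Rightarrow> 'a pmf" and Ax :: "'a set"
  assumes Ax_ne: "Ax \<noteq> {}" and gam: "0 < gam" "gam < 1" and bet: "0 < bet"
  shows "\<forall>(Lf :: real \<Rightarrow> 's \<Rightarrow> 'a \<Rightarrow> real) pixf gf.
        (\<forall>l>0. (\<forall>s a. 0 \<le> Lf l s a) \<and> (\<forall>s a. Lf l s a \<le> l) \<and> (\<exists>s a. Lf l s a = l)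
               \<and> optimal_pair P pie Ax (Lf l) bet gam (pixf l) (gf l))
        \<longrightarrow> (\<forall>s. ((\<lambda>l. n_interv P pie (pixf l) (gf l) s) \<longlongrightarrow> 0) (at_right 0))"
proof (intro allI impI)
  fix Lf :: "real \<Rightarrow> 's \<Rightarrow> 'a \<Rightarrow> real" and pixf gf s
  assume H: "\<forall>l>0. (\<forall>s a. 0 \<le> Lf l s a) \<and> (\<forall>s a. Lf l s a \<le> l) \<and> (\<exists>s a. Lf l s a = l)
               \<and> optimal_pair P pie Ax (Lf l) bet gam (pixf l) (gf l)"
  have g0: "0 \<le> gam" using gam by simp
  obtain a0 where a0: "a0 \<in> Ax" using Ax_ne by blast
  have nog: "\<not> gf l s'" if l: "0 < l" "l < bet * (1 - gam)" for l s'
  proof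
    assume gs: "gf l s'"
    have Ln: "\<And>s a. 0 \<le> Lf l s a" and Lu: "\<And>s a. Lf l s a \<le> l"
      and op: "optimal_pair P pie Ax (Lf l) bet gam (pixf l) (gf l)" using H l by auto
    let ?A = "{pg. adm_xplr Ax (fst pg)}"
    let ?f = "\<lambda>pg. sw_value P pie (Lf l) bet gam (fst pg) (snd pg) s'"
    have mem: "((\<lambda>_. return_pmf a0), (\<lambda>_. False)) \<in> ?A" using a0 by (simp add: adm_xplr_def)
    have le: "?f pg \<le> 0" for pg using sw_value_le0[where L="Lf l" and B=l, OF Ln Lu] bet g0 gam(2) by simp
    have "- l / (1 - gam) \<le> ?f ((\<lambda>_. return_pmf a0), (\<lambda>_. False))"
      using sw_value_never[where L="Lf l" and l=l, OF Ln Lu g0 gam(2)] by simp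
    also have "\<dots> \<le> v_opt P pie Ax (Lf l) bet gam s'"
      unfolding v_opt_def by (rule cSUP_upper[OF mem]) (rule bdd_aboveI[where M=0], use le in auto)
    also have "\<dots> = sw_value P pie (Lf l) bet gam (pixf l) (gf l) s'"
      using op unfolding optimal_pair_def by simp
    also have "\<dots> \<le> - bet" using sw_value_interv[where L="Lf l" and B=l and g="gf l" and s=s' and pix="pixf l" and P=P and pie=pie and bet=bet and gam=gam, OF Ln Lu _ g0 gam(2) gs] bet by simp
    finally have "- l / (1 - gam) \<le> - bet" .
    then have "bet * (1 - gam) \<le> l" using gam by (simp add: field_simps)
    then show False using l by simp
  qed
  have "eventually (\<lambda>l. n_interv P pie (pixf l) (gf l) s = 0) (at_right 0)"
    unfolding eventually_at_right_field
  proof (intro exI conjI allI impI)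
    show "0 < bet * (1 - gam)" using bet gam by simp
    fix l :: real assume "0 < l" "l < bet * (1 - gam)"
    then have "\<forall>s'. \<not> gf l s'" using nog by blast
    then show "n_interv P pie (pixf l) (gf l) s = 0" unfolding n_interv_def by simp
  qed
  then show "((\<lambda>l. n_interv P pie (pixf l) (gf l) s) \<longlongrightarrow> 0) (at_right 0)"
    by (rule tendsto_eventually)
qed


theorem proposition2:
  fixes P :: "'a::finite \<Rightarrow> 's::countable \<Rightarrow> 's pmf"
    and pie :: "'s \<Rightarrow> 'a pmf"
    and Aexp Ax :: "'a set"
    and L :: "'s \<Rightarrow> 'a \<Rightarrow> real"
    and bet gam :: real
  assumes exploit_supp: "\<forall>s. set_pmf (pie s) \<subseteq> Aexp"
    and Ax_ne: "Ax \<noteq> {}"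
    and gam: "0 < gam" "gam < 1"
    and bet: "0 < bet"
    and L_nonneg: "\<forall>s a. 0 \<le> L s a"
    and L_bdd: "\<exists>B. \<forall>s a. L s a \<le> B"
  shows
    "((\<exists>pix g. optimal_pair P pie Ax L bet gam pix g) \<and>
      (\<forall>pix g. optimal_pair P pie Ax L bet gam pix g \<longrightarrow>
         optimal_pair P pie Ax L bet gam pix
           (\<lambda>s. Mop P L bet gam pix (v_opt P pie Ax L bet gam) s = v_opt P pie Ax L bet gam s)))
     \<and>
     (\<forall>(Lf :: real \<Rightarrow> 's \<Rightarrow> 'a \<Rightarrow> real) pixf gf.
        (\<forall>l>0. (\<forall>s a. 0 \<le> Lf l s a) \<and> (\<forall>s a. Lf l s a \<le> l) \<and> (\<exists>s a. Lf l s a = l)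
               \<and> optimal_pair P pie Ax (Lf l) bet gam (pixf l) (gf l))
        \<longrightarrow> (\<forall>s. ((\<lambda>l. n_interv P pie (pixf l) (gf l) s) \<longlongrightarrow> 0) (at_right 0)))"
proof -
  obtain B where LB: "\<forall>s a. L s a \<le> B" using L_bdd by blast
  show ?thesis
    using part_i[OF Ax_ne gam L_nonneg LB, where P=P and pie=pie and bet=bet]
          part_ii[OF Ax_ne gam bet, where P=P and pie=pie]
    by blast
qed

end
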